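(* Let $n\geq 5$, let $P=(Y,X,Z)$ be a path of length two in $AQ_n$, and let $U\in N_{AQ_n}(P)$. Then $|N_{AQ_n}(\{U,X,Y,Z\})|\geq 8n-31$. If moreover $Z=\overline{X}_n$, then $|N_{AQ_n}(\{U,X,Y,Z\})|\geq 8n-29$.
   Context: The $n$-dimensional augmented cube $AQ_n$ has vertex set $\{0,1\}^n$, vertices written as strings $X=x_nx_{n-1}\cdots x_1$. For $1\le i\le n$ let $X_i=x_n\cdots x_{i+1}\bar x_i x_{i-1}\cdots x_1$ (flip bit $i$) and $\overline{X}_i=x_n\cdots x_{i+1}\bar x_i\bar x_{i-1}\cdots\bar x_1$ (flip bits $i,\dots,1$), where $\bar x=1-x$. Two distinct vertices $X,Y$ are adjacent iff $Y=X_i$ for some $1\le i\le n$ or $Y=\overline{X}_i$ for some $2\le i\le n$. For a vertex set (or subgraph) $T$, $N_{AQ_n}(T)=\bigcup_{V\in T}N_{AQ_n}(V)\setminus T$, where $N_{AQ_n}(V)$ is the neighbor set of $V$. *)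

theory Defs
  imports Main
begin

text \<open>A vertex X = x_n ... x_1 of AQ_n is encoded as the set of positions i in {1..n}
  with x_i = 1.  Flipping bit i is symmetric difference with {i}; flipping bits i,...,1
  is symmetric difference with {1..i}.\<close>

definition AQ_vertices :: "nat \<Rightarrow> nat set set" where
  "AQ_vertices n = Pow {1..n}"

definition flip_bit :: "nat set \<Rightarrow> nat \<Rightarrow> nat set" where
  "flip_bit X i = (X - {i}) \<union> ({i} - X)"

definition flip_low :: "nat set \<Rightarrow> nat \<Rightarrow> nat set" where
  "flip_low X i = (X - {1..i}) \<union> ({1..i} - X)"

definition AQ_adj :: "nat \<Rightarrow> nat set \<Rightarrow> nat set \<Rightarrow> bool" where
  "AQ_adj n X Y \<longleftrightarrow> X \<in> AQ_vertices n \<and> Y \<in> AQ_vertices n \<and> X \<noteq> Y \<and>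
     ((\<exists>i\<in>{1..n}. Y = flip_bit X i) \<or> (\<exists>i\<in>{2..n}. Y = flip_low X i))"

definition AQ_nbr :: "nat \<Rightarrow> nat set \<Rightarrow> nat set set" where
  "AQ_nbr n V = {W. AQ_adj n V W}"

definition AQ_N :: "nat \<Rightarrow> nat set set \<Rightarrow> nat set set" where
  "AQ_N n T = (\<Union>V\<in>T. AQ_nbr n V) - T"

definition AQ_path2 :: "nat \<Rightarrow> nat set \<Rightarrow> nat set \<Rightarrow> nat set \<Rightarrow> bool" where
  "AQ_path2 n Y X Z \<longleftrightarrow> Y \<noteq> X \<and> X \<noteq> Z \<and> Y \<noteq> Z \<and> AQ_adj n Y X \<and> AQ_adj n X Z"

end

theory Submission
  imports Defs
begin


definition sd :: "nat set \<Rightarrow> nat set \<Rightarrow> nat set" where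
  "sd A B = (A - B) \<union> (B - A)"

lemma sd_mem[simp]: "x \<in> sd A B \<longleftrightarrow> (x \<in> A) \<noteq> (x \<in> B)"
  by (auto simp: sd_def)

lemma sd_cancel[simp]: "sd A (sd A B) = B" "sd (sd A B) B = A" "sd A A = {}"
  by (auto simp: set_eq_iff)

lemma sd_comm: "sd A B = sd B A" by (auto simp: set_eq_iff)
lemma sd_assoc: "sd (sd A B) C = sd A (sd B C)" by (auto simp: set_eq_iff)

lemma sd_inj: "sd A B = sd A C \<longleftrightarrow> B = C"
  by (metis sd_cancel(1))

lemma sd_empty_iff: "sd A B = {} \<longleftrightarrow> A = B" by (auto simp: set_eq_iff)

definition E :: "nat \<Rightarrow> nat set set" where
  "E m = {{x, y} | x y. 1 \<le> x \<and> x < y \<and> y \<le> m \<and> y \<le> x + 2}"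

lemma E_pair_iff: "{x, y} \<in> E m \<longleftrightarrow> x \<noteq> y \<and> 1 \<le> x \<and> 1 \<le> y \<and> x \<le> m \<and> y \<le> m \<and> x \<le> y + 2 \<and> y \<le> x + 2"
proof
  assume "{x, y} \<in> E m"
  then obtain a b where "{x,y} = {a,b}" "1 \<le> a" "a < b" "b \<le> m" "b \<le> a + 2"
    unfolding E_def by blast
  then show "x \<noteq> y \<and> 1 \<le> x \<and> 1 \<le> y \<and> x \<le> m \<and> y \<le> m \<and> x \<le> y + 2 \<and> y \<le> x + 2"
    by (auto simp: doubleton_eq_iff)
next
  assume h: "x \<noteq> y \<and> 1 \<le> x \<and> 1 \<le> y \<and> x \<le> m \<and> y \<le> m \<and> x \<le> y + 2 \<and> y \<le> x + 2"
  show "{x, y} \<in> E m"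
  proof (cases "x < y")
    case True then show ?thesis using h unfolding E_def by blast
  next
    case False then have "{x,y} = {y,x}" "y < x" using h by auto
    then show ?thesis using h unfolding E_def by blast
  qed
qed

lemma E_elem: "e \<in> E m \<Longrightarrow> \<exists>x y. e = {x,y} \<and> 1 \<le> x \<and> x < y \<and> y \<le> m \<and> y \<le> x + 2"
  unfolding E_def by blast

lemma E_card2: "e \<in> E m \<Longrightarrow> card e = 2"
  by (auto dest!: E_elem)

lemma E_finite: "finite (E m)"
proof -
  have "E m \<subseteq> Pow {1..m}" unfolding E_def by auto
  then show ?thesis by (rule finite_subset) auto
qed

lemma E_card: "m \<ge> 2 \<Longrightarrow> card (E m) = 2 * m - 3"
proof -
  assume m: "m \<ge> 2"
  have eq: "E m = (\<lambda>x. {x, x+1}) ` {1..m-1} \<union> (\<lambda>x. {x, x+2}) ` {1..m-2}"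
  proof (rule set_eqI, rule iffI)
    fix e assume "e \<in> E m"
    then obtain x y where e: "e = {x,y}" "1 \<le> x" "x < y" "y \<le> m" "y \<le> x + 2" by (auto dest!: E_elem)
    then have "y = x + 1 \<or> y = x + 2" by arith
    then show "e \<in> (\<lambda>x. {x, x+1}) ` {1..m-1} \<union> (\<lambda>x. {x, x+2}) ` {1..m-2}"
      using e by auto
  next
    fix e assume "e \<in> (\<lambda>x. {x, x+1}) ` {1..m-1} \<union> (\<lambda>x. {x, x+2}) ` {1..m-2}"
    then show "e \<in> E m" by (auto simp: E_pair_iff)
  qed
  have d: "(\<lambda>x. {x, x+1}) ` {1..m-1} \<inter> (\<lambda>x. {x, x+2}) ` {1..m-2} = {}"
    by (auto dest!: doubleton_eq_iff[THEN iffD1])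
  have i1: "inj_on (\<lambda>x. {x, x+1::nat}) {1..m-1}" by (auto simp: inj_on_def doubleton_eq_iff)
  have i2: "inj_on (\<lambda>x. {x, x+2::nat}) {1..m-2}" by (auto simp: inj_on_def doubleton_eq_iff)
  have "card (E m) = card ((\<lambda>x. {x, x+1}) ` {1..m-1}) + card ((\<lambda>x. {x, x+2}) ` {1..m-2})"
    unfolding eq using d by (intro card_Un_disjoint) auto
  also have "\<dots> = (m - 1) + (m - 2)" using card_image[OF i1] card_image[OF i2] by simp
  finally show ?thesis using m by simp
qed

lemma card_sd: "finite A \<Longrightarrow> finite B \<Longrightarrow> card (sd A B) + 2 * card (A \<inter> B) = card A + card B"
proof -
  assume f: "finite A" "finite B"
  have u: "A \<union> B = sd A B \<union> (A \<inter> B)" by auto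
  have "card (A \<union> B) = card (sd A B) + card (A \<inter> B)"
    unfolding u using f by (intro card_Un_disjoint) (auto simp: sd_def)
  moreover have "card (A \<union> B) + card (A \<inter> B) = card A + card B" using card_Un_Int[OF f] by simp
  ultimately show ?thesis by simp
qed

definition K :: "nat \<Rightarrow> nat set \<Rightarrow> nat set set" where
  "K m w = {e \<in> E m. sd e w \<in> E m}"

definition cc :: "nat \<Rightarrow> nat set \<Rightarrow> nat" where
  "cc m w = card (K m w)"

lemma K_finite: "finite (K m w)" unfolding K_def using E_finite by auto

definition R :: "nat \<Rightarrow> nat \<Rightarrow> nat \<Rightarrow> nat set" where
  "R m p q = {r. 1 \<le> r \<and> r \<le> m \<and> r \<noteq> p \<and> r \<noteq> q \<and> r \<le> p+2 \<and> p \<le> r+2 \<and> r \<le> q+2 \<and> q \<le> r+2}"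

lemma R_sub: "p < q \<Longrightarrow> R m p q \<subseteq> (if q = p + 2 then {p+1} else {q-2, p+2})"
  unfolding R_def by auto

lemma K2_sub: assumes pq: "p < q"
  shows "K m {p,q} \<subseteq> (\<lambda>r. {p,r}) ` R m p q \<union> (\<lambda>r. {q,r}) ` R m p q"
proof
  fix e assume "e \<in> K m {p,q}"
  then have eE: "e \<in> E m" and fE: "sd e {p,q} \<in> E m" unfolding K_def by auto
  obtain x y where e: "e = {x,y}" "1 \<le> x" "x < y" "y \<le> m" "y \<le> x + 2" using E_elem[OF eE] by blast
  have c2: "card (sd e {p,q}) = 2" using fE E_card2 by blast
  consider (a) "x = p" "y \<noteq> q" | (b) "x = q" | (c) "y = p" | (d) "y = q" "x \<noteq> p" | (ee) "x=p" "y=q"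
    | (f) "x \<notin> {p,q}" "y \<notin> {p,q}" by auto
  then show "e \<in> (\<lambda>r. {p,r}) ` R m p q \<union> (\<lambda>r. {q,r}) ` R m p q"
  proof cases
    case a
    then have "sd e {p,q} = {y,q}" using e pq by auto
    then have "{y,q} \<in> E m" using fE by simp
    then have "y \<in> R m p q" using eE e a unfolding R_def by (auto simp: E_pair_iff)
    then show ?thesis using e a by auto
  next
    case b
    then have "sd e {p,q} = {y,p}" using e pq by auto
    then have "{y,p} \<in> E m" using fE by simp
    then have "y \<in> R m p q" using eE e b unfolding R_def by (auto simp: E_pair_iff)
    then show ?thesis using e b by auto
  next
    case c
    then have "sd e {p,q} = {x,q}" using e pq by auto
    then have "{x,q} \<in> E m" using fE by simp
    then have "x \<in> R m p q" using eE e c unfolding R_def by (auto simp: E_pair_iff)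
    then show ?thesis using e c by auto
  next
    case d
    then have "sd e {p,q} = {x,p}" using e pq by auto
    then have "{x,p} \<in> E m" using fE by simp
    then have "x \<in> R m p q" using eE e d unfolding R_def by (auto simp: E_pair_iff)
    then show ?thesis using e d by auto
  next
    case ee
    then have "sd e {p,q} = {}" using e by auto
    then show ?thesis using c2 by simp
  next
    case f
    then have s: "sd e {p,q} = {x,y,p,q}" using e by auto
    have "x \<noteq> y" "x \<noteq> p" "x \<noteq> q" "y \<noteq> p" "y \<noteq> q" "p \<noteq> q" using f e(3) pq by auto
    then have "card {x,y,p,q} = 4" by simp
    then show ?thesis using c2 s by simp
  qed
qed

lemma cc2: assumes pq: "p < q"
  shows "cc m {p,q} \<le> 4" and "3 \<le> cc m {p,q} \<Longrightarrow> (q = p+1 \<and> 2 \<le> p \<and> p+2 \<le> m) \<or> q = p+3"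
proof -
  have fR: "finite (R m p q)" unfolding R_def by (rule finite_subset[of _ "{..m}"]) auto
  have "cc m {p,q} \<le> card ((\<lambda>r. {p,r}) ` R m p q \<union> (\<lambda>r. {q,r}) ` R m p q)"
    unfolding cc_def using K2_sub[OF pq] fR by (intro card_mono) auto
  also have "\<dots> \<le> card ((\<lambda>r. {p,r}) ` R m p q) + card ((\<lambda>r. {q,r}) ` R m p q)" by (rule card_Un_le)
  also have "\<dots> \<le> card (R m p q) + card (R m p q)" by (intro add_mono card_image_le fR)
  finally have cR: "cc m {p,q} \<le> 2 * card (R m p q)" by simp
  have Rs: "R m p q \<subseteq> (if q = p + 2 then {p+1} else {q-2, p+2})" by (rule R_sub[OF pq])
  have "card (R m p q) \<le> card (if q = p + 2 then {p+1} else {q-2, p+2})"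
    using Rs by (intro card_mono) auto
  also have "\<dots> \<le> 2" by (auto simp: card_insert_if)
  finally show "cc m {p,q} \<le> 4" using cR by simp
  assume "3 \<le> cc m {p,q}"
  then have R2: "2 \<le> card (R m p q)" using cR by simp
  have nq: "q \<noteq> p + 2"
  proof
    assume "q = p + 2"
    then have "card (R m p q) \<le> card {p+1}" using Rs by (intro card_mono) auto
    then show False using R2 by simp
  qed
  then have Rs2: "R m p q \<subseteq> {q-2, p+2}" using Rs by simp
  have "card (R m p q) \<le> card {q-2,p+2}" using Rs2 by (intro card_mono) auto
  then have "card {q-2, p+2} = 2" using R2 by (auto simp: card_insert_if split: if_splits)
  then have "card (R m p q) = card {q-2,p+2}" using R2 \<open>card (R m p q) \<le> card {q-2,p+2}\<close> by simp
  then have "R m p q = {q-2,p+2}" using Rs2 by (intro card_subset_eq) auto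
  then have "q - 2 \<in> R m p q" "p + 2 \<in> R m p q" "q - 2 \<noteq> p + 2"
    using \<open>card {q-2, p+2} = 2\<close> by (auto simp: card_insert_if split: if_splits)
  then show "(q = p+1 \<and> 2 \<le> p \<and> p+2 \<le> m) \<or> q = p+3" unfolding R_def using pq by auto
qed

lemma K4_sub: assumes o: "a < b" "b < c" "c < d"
  shows "K m {a,b,c,d} \<subseteq> {{a,b},{c,d},{a,c},{b,d}}"
    and "\<not> (b = a+1 \<and> c = a+2 \<and> d = a+3) \<Longrightarrow> K m {a,b,c,d} \<subseteq> {{a,b},{c,d}}"
proof -
  have main: "e \<in> {{a,b},{c,d}} \<or> (e \<in> {{a,c},{b,d}} \<and> b = a+1 \<and> c = a+2 \<and> d = a+3)"
    if eK: "e \<in> K m {a,b,c,d}" for e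
  proof -
    let ?w = "{a,b,c,d}"
    from eK have eE: "e \<in> E m" and fE: "sd e ?w \<in> E m" unfolding K_def by auto
    obtain x y where e: "e = {x,y}" "1 \<le> x" "x < y" "y \<le> m" "y \<le> x + 2" using E_elem[OF eE] by blast
    have cw: "card ?w = 4" using o by simp
    have "card (sd e ?w) + 2 * card (e \<inter> ?w) = card e + card ?w" by (rule card_sd) (auto simp: e)
    then have "card (e \<inter> ?w) = 2" using E_card2[OF eE] E_card2[OF fE] cw by simp
    then have "e \<inter> ?w = e" using E_card2[OF eE] by (intro card_subset_eq) (auto simp: e)
    then have sub: "x \<in> ?w" "y \<in> ?w" using e by auto
    have esub: "e \<subseteq> ?w" using \<open>e \<inter> ?w = e\<close> by blast
    have fw: "sd e ?w = ?w - e" using esub unfolding sd_def by blast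
    have ad: "\<not> (x = a \<and> y = d)" using e o by auto
    have bc: "\<not> (x = b \<and> y = c)"
    proof
      assume h: "x = b \<and> y = c"
      then have "?w - e = {a,d}" using e o by auto
      then have "{a,d} \<in> E m" using fE fw by simp
      then show False using o by (simp add: E_pair_iff)
    qed
    have ac: "x = a \<and> y = c \<Longrightarrow> b = a+1 \<and> c = a+2 \<and> d = a+3"
    proof -
      assume h: "x = a \<and> y = c"
      then have "?w - e = {b,d}" using e o by auto
      then have "{b,d} \<in> E m" using fE fw by simp
      then show ?thesis using o e h by (simp add: E_pair_iff)
    qed
    have bd: "x = b \<and> y = d \<Longrightarrow> b = a+1 \<and> c = a+2 \<and> d = a+3"
    proof -
      assume h: "x = b \<and> y = d"
      then have "?w - e = {a,c}" using e o by auto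
      then have "{a,c} \<in> E m" using fE fw by simp
      then show ?thesis using o e h by (simp add: E_pair_iff)
    qed
    have "(x = a \<and> y = b) \<or> (x = c \<and> y = d) \<or> (x = a \<and> y = c) \<or> (x = b \<and> y = d) \<or> (x = a \<and> y = d) \<or> (x = b \<and> y = c)"
      using sub e(3) o by (simp only: insert_iff empty_iff simp_thms) (elim disjE; simp)
    then show ?thesis
    proof (elim disjE)
      assume "x = a \<and> y = b" then have "e = {a,b}" using e(1) by simp
      then show ?thesis by blast
    next
      assume "x = c \<and> y = d" then have "e = {c,d}" using e(1) by simp
      then show ?thesis by blast
    next
      assume h: "x = a \<and> y = c" then have "e = {a,c}" using e(1) by simp
      then show ?thesis using ac[OF h] by blast
    next
      assume h: "x = b \<and> y = d" then have "e = {b,d}" using e(1) by simp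
      then show ?thesis using bd[OF h] by blast
    next
      assume "x = a \<and> y = d" then show ?thesis using ad by blast
    next
      assume "x = b \<and> y = c" then show ?thesis using bc by blast
    qed
  qed
  show "K m {a,b,c,d} \<subseteq> {{a,b},{c,d},{a,c},{b,d}}" using main by blast
  show "\<not> (b = a+1 \<and> c = a+2 \<and> d = a+3) \<Longrightarrow> K m {a,b,c,d} \<subseteq> {{a,b},{c,d}}" using main by blast
qed

lemma cc4: assumes o: "a < b" "b < c" "c < d"
  shows "cc m {a,b,c,d} \<le> 4" and "3 \<le> cc m {a,b,c,d} \<Longrightarrow> b = a+1 \<and> c = a+2 \<and> d = a+3"
proof -
  have "cc m {a,b,c,d} \<le> card {{a,b},{c,d},{a,c},{b,d}}"
    unfolding cc_def by (intro card_mono K4_sub(1)[OF o]) auto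
  also have "\<dots> \<le> 4" by (auto simp: card_insert_if)
  finally show "cc m {a,b,c,d} \<le> 4" .
  assume 3: "3 \<le> cc m {a,b,c,d}"
  show "b = a+1 \<and> c = a+2 \<and> d = a+3"
  proof (rule ccontr)
    assume "\<not> (b = a+1 \<and> c = a+2 \<and> d = a+3)"
    then have "cc m {a,b,c,d} \<le> card {{a,b},{c,d}}"
      unfolding cc_def by (intro card_mono K4_sub(2)[OF o]) auto
    also have "\<dots> \<le> 2" by (auto simp: card_insert_if)
    finally show False using 3 by simp
  qed
qed

lemma card2_ord: "card w = 2 \<Longrightarrow> \<exists>p q. p < q \<and> w = {p,(q::nat)}"
proof -
  assume "card w = 2"
  then obtain x y where "w = {x,y}" "x \<noteq> y" by (auto simp: card_2_iff)
  show ?thesis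
  proof (cases "x < y")
    case True then show ?thesis using \<open>w = {x,y}\<close> by blast
  next
    case False then have "y < x" using \<open>x \<noteq> y\<close> by simp
    moreover have "w = {y,x}" using \<open>w = {x,y}\<close> by auto
    ultimately show ?thesis by blast
  qed
qed

lemma card4_ord: "card w = 4 \<Longrightarrow> \<exists>a b c d. a < b \<and> b < c \<and> c < d \<and> w = {a,b,c,(d::nat)}"
proof -
  assume cw: "card w = 4"
  then have fw: "finite w" by (metis card.infinite zero_neq_numeral)
  define xs where "xs = sorted_list_of_set w"
  have len: "length xs = 4" using cw unfolding xs_def by simp
  have st: "sorted_wrt (<) xs" unfolding xs_def by (rule strict_sorted_list_of_set)
  have sw: "set xs = w" unfolding xs_def using fw by simp
  obtain a b c d where xs: "xs = [a,b,c,d]" using len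
    by (auto simp: numeral_eq_Suc length_Suc_conv)
  show ?thesis using st sw xs by auto
qed

lemma K_card: assumes "w \<noteq> {}" "e \<in> K m w" shows "card w = 2 \<or> card w = 4"
proof -
  from assms have eE: "e \<in> E m" and fE: "sd e w \<in> E m" unfolding K_def by auto
  let ?f = "sd e w"
  have w: "w = sd e ?f" by simp
  have fe: "finite e" "finite ?f" using E_card2[OF eE] E_card2[OF fE] by (auto intro: card_ge_0_finite)
  have cs: "card w + 2 * card (e \<inter> ?f) = 4" using card_sd[OF fe] E_card2[OF eE] E_card2[OF fE] w by simp
  have "card (e \<inter> ?f) \<noteq> 2"
  proof
    assume h: "card (e \<inter> ?f) = 2"
    then have "e \<inter> ?f = e" using E_card2[OF eE] fe by (intro card_subset_eq) auto
    moreover have "e \<inter> ?f = ?f" using h E_card2[OF fE] fe by (intro card_subset_eq) auto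
    ultimately have "e = ?f" by simp
    then have "w = {}" using w by simp
    then show False using assms by simp
  qed
  then show ?thesis using cs by arith
qed

lemma cc_le4: assumes "w \<noteq> {}" shows "cc m w \<le> 4"
proof (cases "K m w = {}")
  case True then show ?thesis by (simp add: cc_def)
next
  case False
  then obtain e where "e \<in> K m w" by auto
  then have "card w = 2 \<or> card w = 4" using K_card assms by blast
  then show ?thesis
  proof
    assume "card w = 2"
    then obtain p q where "p < q" "w = {p,q}" using card2_ord by blast
    then show ?thesis using cc2(1) by simp
  next
    assume "card w = 4"
    then obtain a b c d where "a < b" "b < c" "c < d" "w = {a,b,c,d}" using card4_ord by blast
    then show ?thesis using cc4(1) by simp
  qed
qed

lemma ccE: assumes "e \<in> E m" "3 \<le> cc m e" shows "\<exists>a. e = {a,a+1} \<and> 2 \<le> a \<and> a+2 \<le> m"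
proof -
  obtain x y where e: "e = {x,y}" "1 \<le> x" "x < y" "y \<le> m" "y \<le> x + 2" using E_elem[OF assms(1)] by blast
  have "(y = x+1 \<and> 2 \<le> x \<and> x+2 \<le> m) \<or> y = x+3" using cc2(2)[OF e(3)] assms(2) e(1) by simp
  then show ?thesis using e by auto
qed

lemma cc_last: assumes "m \<ge> 2" shows "cc m {m-1, m} \<le> 2"
proof (rule ccontr)
  assume "\<not> cc m {m-1, m} \<le> 2"
  then have "3 \<le> cc m {m-1,m}" by simp
  then have "(m = (m-1)+1 \<and> 2 \<le> m-1 \<and> (m-1)+2 \<le> m) \<or> m = (m-1)+3" using cc2(2)[of "m-1" m m] assms by simp
  then show False using assms by arith
qed

lemma cc_pair: assumes "a \<noteq> b" "3 \<le> cc m (sd {a,a+1} {b,b+1})" shows "b = a+2 \<or> a = b+2"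
proof -
  consider (s1) "b = a+1" | (s2) "a = b+1" | (lt) "a + 2 \<le> b" | (gt) "b + 2 \<le> a" using assms(1) by arith
  then show ?thesis
  proof cases
    case s1
    then have "sd {a,a+1} {b,b+1} = {a, a+2}" by auto
    then have "3 \<le> cc m {a,a+2}" using assms(2) by simp
    then show ?thesis using cc2(2)[of a "a+2" m] by simp
  next
    case s2
    then have "sd {a,a+1} {b,b+1} = {b, b+2}" by auto
    then have "3 \<le> cc m {b,b+2}" using assms(2) by simp
    then show ?thesis using cc2(2)[of b "b+2" m] by simp
  next
    case lt
    then have "sd {a,a+1} {b,b+1} = {a,a+1,b,b+1}" by auto
    then have "3 \<le> cc m {a,a+1,b,b+1}" using assms(2) by simp
    then show ?thesis using cc4(2)[of a "a+1" b "b+1" m] lt by simp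
  next
    case gt
    then have "sd {a,a+1} {b,b+1} = {b,b+1,a,a+1}" by auto
    then have "3 \<le> cc m {b,b+1,a,a+1}" using assms(2) by simp
    then show ?thesis using cc4(2)[of b "b+1" a "a+1" m] gt by simp
  qed
qed

lemma bonf: assumes "finite A" "finite B" "finite C" "finite D"
  shows "card A + card B + card C + card D + card (A \<inter> B \<inter> C) \<le>
    card (A \<union> B \<union> C \<union> D) + card (A \<inter> B) + card (A \<inter> C) + card (B \<inter> C)
      + card (A \<inter> D) + card (B \<inter> D) + card (C \<inter> D)"
proof -
  have f: "finite (A \<union> B)" "finite (A \<union> B \<union> C)" using assms by auto
  have 1: "card (A \<union> B) + card (A \<inter> B) = card A + card B" using card_Un_Int[of A B] assms by simp
  have 2: "card (A \<union> B \<union> C) + card ((A \<union> B) \<inter> C) = card (A \<union> B) + card C"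
    using card_Un_Int[of "A \<union> B" C] assms f by simp
  have "(A \<union> B) \<inter> C = (A \<inter> C) \<union> (B \<inter> C)" by auto
  moreover have "card ((A \<inter> C) \<union> (B \<inter> C)) + card ((A \<inter> C) \<inter> (B \<inter> C)) = card (A \<inter> C) + card (B \<inter> C)"
    using card_Un_Int[of "A \<inter> C" "B \<inter> C"] assms by simp
  moreover have "(A \<inter> C) \<inter> (B \<inter> C) = A \<inter> B \<inter> C" by auto
  ultimately have 3: "card ((A \<union> B) \<inter> C) + card (A \<inter> B \<inter> C) = card (A \<inter> C) + card (B \<inter> C)" by simp
  have 4: "card (A \<union> B \<union> C \<union> D) + card ((A \<union> B \<union> C) \<inter> D) = card (A \<union> B \<union> C) + card D"
    using card_Un_Int[of "A \<union> B \<union> C" D] assms f by simp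
  have eqD: "(A \<union> B \<union> C) \<inter> D = (A \<inter> D) \<union> (B \<inter> D) \<union> (C \<inter> D)" by auto
  have u1: "card ((A \<inter> D) \<union> (B \<inter> D) \<union> (C \<inter> D)) \<le> card ((A \<inter> D) \<union> (B \<inter> D)) + card (C \<inter> D)"
    by (rule card_Un_le)
  have u2: "card ((A \<inter> D) \<union> (B \<inter> D)) \<le> card (A \<inter> D) + card (B \<inter> D)" by (rule card_Un_le)
  have "card ((A \<union> B \<union> C) \<inter> D) \<le> card (A \<inter> D) + card (B \<inter> D) + card (C \<inter> D)"
    unfolding eqD using u1 u2 by linarith
  then show ?thesis using 1 2 3 4 by linarith
qed

definition Nb :: "nat \<Rightarrow> nat set \<Rightarrow> nat set set" where
  "Nb m v = (\<lambda>e. sd v e) ` E m"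

lemma Nb_card: "card (Nb m v) = card (E m)"
  unfolding Nb_def by (rule card_image) (auto simp: inj_on_def sd_inj)

lemma Nb_finite: "finite (Nb m v)" unfolding Nb_def using E_finite by simp

lemma Nb_int: "Nb m a \<inter> Nb m b = (\<lambda>e. sd a e) ` K m (sd a b)"
proof (rule set_eqI, rule iffI)
  fix z assume "z \<in> Nb m a \<inter> Nb m b"
  then obtain e e' where z: "z = sd a e" "e \<in> E m" "z = sd b e'" "e' \<in> E m" unfolding Nb_def by auto
  have "e' = sd b z" using z(3) by simp
  also have "\<dots> = sd e (sd a b)" using z(1) by (auto simp: set_eq_iff)
  finally have "e \<in> K m (sd a b)" using z unfolding K_def by auto
  then show "z \<in> (\<lambda>e. sd a e) ` K m (sd a b)" using z by auto
next
  fix z assume "z \<in> (\<lambda>e. sd a e) ` K m (sd a b)"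
  then obtain e where z: "z = sd a e" "e \<in> E m" "sd e (sd a b) \<in> E m" unfolding K_def by auto
  have "z = sd b (sd e (sd a b))" using z(1) by (auto simp: set_eq_iff)
  then show "z \<in> Nb m a \<inter> Nb m b" using z unfolding Nb_def by auto
qed

lemma Nb_int_card: "card (Nb m a \<inter> Nb m b) = cc m (sd a b)"
  unfolding Nb_int cc_def by (rule card_image) (auto simp: inj_on_def sd_inj)

lemma triple: assumes "1 \<le> a" "a + 3 \<le> m"
  shows "Nb m x \<inter> Nb m (sd x {a,a+1}) \<inter> Nb m (sd x {a+2,a+3}) \<noteq> {}"
proof -
  let ?v = "sd x {a+1,a+2}"
  have "?v \<in> Nb m x" unfolding Nb_def using assms by (auto simp: E_pair_iff)
  moreover have "?v = sd (sd x {a,a+1}) {a,a+2}" by (auto simp: set_eq_iff)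
  then have "?v \<in> Nb m (sd x {a,a+1})" unfolding Nb_def using assms by (auto simp: E_pair_iff)
  moreover have "?v = sd (sd x {a+2,a+3}) {a+1,a+3}" by (auto simp: set_eq_iff)
  then have "?v \<in> Nb m (sd x {a+2,a+3})" unfolding Nb_def using assms by (auto simp: E_pair_iff)
  ultimately show ?thesis by blast
qed

lemma key:
  assumes e1: "e1 \<in> E m" and e2: "e2 \<in> E m" and ne: "e1 \<noteq> e2"
    and y: "y = sd x e1" and z: "z = sd x e2"
  shows "cc m e1 + cc m e2 + cc m (sd e1 e2) \<le> 11 + card (Nb m x \<inter> Nb m y \<inter> Nb m z)"
    and "e2 = {m-1, m} \<Longrightarrow> m \<ge> 2 \<Longrightarrow> cc m e1 + cc m e2 + cc m (sd e1 e2) \<le> 9 + card (Nb m x \<inter> Nb m y \<inter> Nb m z)"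
proof -
  have n1: "e1 \<noteq> {}" using E_card2[OF e1] by auto
  have n2: "e2 \<noteq> {}" using E_card2[OF e2] by auto
  have n3: "sd e1 e2 \<noteq> {}" using ne by (simp add: sd_empty_iff)
  have b1: "cc m e1 \<le> 4" using cc_le4[OF n1] .
  have b2: "cc m e2 \<le> 4" using cc_le4[OF n2] .
  have b3: "cc m (sd e1 e2) \<le> 4" using cc_le4[OF n3] .
  have fin: "finite (Nb m x \<inter> Nb m y \<inter> Nb m z)" using Nb_finite by blast
  have tri: "1 \<le> card (Nb m x \<inter> Nb m y \<inter> Nb m z)"
    if "a \<noteq> b" "e1 = {a,a+1}" "e2 = {b,b+1}" "b = a+2 \<or> a = b+2" "a+2 \<le> m" "b + 2 \<le> m + 1" "1 \<le> a" "1 \<le> b" for a b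
  proof -
    have "Nb m x \<inter> Nb m y \<inter> Nb m z \<noteq> {}"
      using that(4)
    proof
      assume "b = a+2"
      then have "e2 = {a+2,a+3}" using that by (simp add: eval_nat_numeral)
      then show ?thesis unfolding y z \<open>e1 = {a,a+1}\<close> \<open>e2 = {a+2,a+3}\<close> by (intro triple) (use that \<open>b = a+2\<close> in simp_all)
    next
      assume "a = b+2"
      then have "e1 = {b+2,b+3}" using that by (simp add: eval_nat_numeral)
      then have "Nb m x \<inter> Nb m z \<inter> Nb m y \<noteq> {}" unfolding y z \<open>e2 = {b,b+1}\<close> \<open>e1 = {b+2,b+3}\<close>
        by (intro triple) (use that \<open>a = b+2\<close> in simp_all)
      then show ?thesis by blast
    qed
    then show ?thesis using fin by (simp add: card_gt_0_iff Suc_le_eq)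
  qed
  show "cc m e1 + cc m e2 + cc m (sd e1 e2) \<le> 11 + card (Nb m x \<inter> Nb m y \<inter> Nb m z)"
  proof (cases "3 \<le> cc m e1 \<and> 3 \<le> cc m e2 \<and> 3 \<le> cc m (sd e1 e2)")
    case True
    then obtain a b where a: "e1 = {a,a+1}" "2 \<le> a" "a+2 \<le> m" and b: "e2 = {b,b+1}" "2 \<le> b" "b+2 \<le> m"
      using ccE[OF e1] ccE[OF e2] by blast
    have "a \<noteq> b" using a b ne by auto
    moreover have "3 \<le> cc m (sd {a,a+1} {b,b+1})" using True a b by simp
    ultimately have "b = a+2 \<or> a = b+2" by (rule cc_pair)
    then have "1 \<le> card (Nb m x \<inter> Nb m y \<inter> Nb m z)" using tri[of a b] a b \<open>a \<noteq> b\<close> by simp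
    then show ?thesis using b1 b2 b3 by linarith
  next
    case False then show ?thesis using b1 b2 b3 by linarith
  qed
  assume e2l: "e2 = {m-1, m}" and m2: "m \<ge> 2"
  have c2: "cc m e2 \<le> 2" using cc_last[OF m2] e2l by simp
  show "cc m e1 + cc m e2 + cc m (sd e1 e2) \<le> 9 + card (Nb m x \<inter> Nb m y \<inter> Nb m z)"
  proof (cases "3 \<le> cc m e1 \<and> 3 \<le> cc m (sd e1 e2)")
    case True
    then obtain a where a: "e1 = {a,a+1}" "2 \<le> a" "a+2 \<le> m"
      using ccE[OF e1] by blast
    have b: "e2 = {m-1, (m-1)+1}" using e2l m2 by simp
    have "a \<noteq> m-1" using a m2 by simp
    moreover have "3 \<le> cc m (sd {a,a+1} {m-1,(m-1)+1})" using True a b by simp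
    ultimately have "m-1 = a+2 \<or> a = (m-1)+2" by (rule cc_pair)
    then have "m - 1 = a + 2" using a by arith
    then have "1 \<le> card (Nb m x \<inter> Nb m y \<inter> Nb m z)" using tri[of a "m-1"] a b m2 by simp
    then show ?thesis using b1 c2 b3 by linarith
  next
    case False then show ?thesis using b1 c2 b3 by linarith
  qed
qed

theorem Bmain:
  assumes m2: "m \<ge> 2" and e1: "e1 \<in> E m" and e2: "e2 \<in> E m" and ne: "e1 \<noteq> e2"
    and y: "y = sd x e1" and z: "z = sd x e2" and u: "u \<noteq> x" "u \<noteq> y" "u \<noteq> z"
  shows "8 * int m - 39 \<le> int (card ((\<Union>v\<in>{u,x,y,z}. Nb m v) - {u,x,y,z}))"
    and "e2 = {m-1, m} \<Longrightarrow> 8 * int m - 37 \<le> int (card ((\<Union>v\<in>{u,x,y,z}. Nb m v) - {u,x,y,z}))"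
proof -
  let ?S = "\<Union>v\<in>{u,x,y,z}. Nb m v"
  have Su: "?S = Nb m x \<union> Nb m y \<union> Nb m z \<union> Nb m u" by auto
  have fS: "finite ?S" using Nb_finite by auto
  have cT: "card {u,x,y,z} \<le> 4" by (auto simp: card_insert_if)
  have "card ?S - card {u,x,y,z} \<le> card (?S - {u,x,y,z})" by (rule diff_card_le_card_Diff) auto
  then have d: "card ?S \<le> card (?S - {u,x,y,z}) + 4" using cT by linarith
  have cE: "card (E m) = 2*m - 3" using E_card m2 by simp
  have B: "card (Nb m x) + card (Nb m y) + card (Nb m z) + card (Nb m u) + card (Nb m x \<inter> Nb m y \<inter> Nb m z) \<le>
    card ?S + card (Nb m x \<inter> Nb m y) + card (Nb m x \<inter> Nb m z) + card (Nb m y \<inter> Nb m z)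
      + card (Nb m x \<inter> Nb m u) + card (Nb m y \<inter> Nb m u) + card (Nb m z \<inter> Nb m u)"
    unfolding Su by (rule bonf) (auto simp: Nb_finite)
  have xy: "sd x y = e1" using y by simp
  have xz: "sd x z = e2" using z by simp
  have yz: "sd y z = sd e1 e2" using y z by (auto simp: set_eq_iff)
  have u1: "cc m (sd x u) \<le> 4" using u by (intro cc_le4) (simp add: sd_empty_iff)
  have u2: "cc m (sd y u) \<le> 4" using u by (intro cc_le4) (simp add: sd_empty_iff)
  have u3: "cc m (sd z u) \<le> 4" using u by (intro cc_le4) (simp add: sd_empty_iff)
  have B2: "4 * (2*m - 3) + card (Nb m x \<inter> Nb m y \<inter> Nb m z) \<le>
     card ?S + cc m e1 + cc m e2 + cc m (sd e1 e2) + 12"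
    using B u1 u2 u3 unfolding Nb_int_card Nb_card cE xy xz yz by linarith
  show "8 * int m - 39 \<le> int (card (?S - {u,x,y,z}))"
    using B2 d key(1)[OF e1 e2 ne y z] m2 by linarith
  assume "e2 = {m-1, m}"
  then show "8 * int m - 37 \<le> int (card (?S - {u,x,y,z}))"
    using B2 d key(2)[OF e1 e2 ne y z] m2 by linarith
qed


definition Gen :: "nat \<Rightarrow> nat set set" where
  "Gen n = {{i}|i. 1 \<le> i \<and> i \<le> n} \<union> {{1..i}|i. 2 \<le> i \<and> i \<le> n}"

lemma flip_bit_sd: "flip_bit X i = sd X {i}" unfolding flip_bit_def sd_def by auto
lemma flip_low_sd: "flip_low X i = sd X {1..i}" unfolding flip_low_def sd_def by auto

lemma Gen_sub: "g \<in> Gen n \<Longrightarrow> g \<subseteq> {1..n} \<and> g \<noteq> {}"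
  unfolding Gen_def by auto

lemma adj_gen: "AQ_adj n V W \<Longrightarrow> V \<in> Pow {1..n} \<and> W \<in> Pow {1..n} \<and> (\<exists>g\<in>Gen n. W = sd V g)"
  unfolding AQ_adj_def AQ_vertices_def Gen_def flip_bit_sd flip_low_sd by auto

lemma nbr_eq: assumes "V \<in> Pow {1..n}" shows "AQ_nbr n V = (\<lambda>g. sd V g) ` Gen n"
proof (rule set_eqI, rule iffI)
  fix W assume "W \<in> AQ_nbr n V"
  then show "W \<in> (\<lambda>g. sd V g) ` Gen n" unfolding AQ_nbr_def using adj_gen by blast
next
  fix W assume "W \<in> (\<lambda>g. sd V g) ` Gen n"
  then obtain g where g: "g \<in> Gen n" "W = sd V g" by auto
  have "W \<in> Pow {1..n}" using g Gen_sub[OF g(1)] assms unfolding sd_def by blast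
  moreover have "V \<noteq> W"
  proof
    assume VW: "V = W"
    have "sd V W = g" using g(2) by simp
    then have "g = {}" unfolding VW by simp
    then show False using Gen_sub[OF g(1)] by simp
  qed
  moreover have "(\<exists>i\<in>{1..n}. W = flip_bit V i) \<or> (\<exists>i\<in>{2..n}. W = flip_low V i)"
  proof -
    from g(1) consider (s) i where "g = {i}" "1 \<le> i" "i \<le> n" | (l) i where "g = {1..i}" "2 \<le> i" "i \<le> n"
      unfolding Gen_def by blast
    then show ?thesis
    proof cases
      case s then have "W = flip_bit V i" using g(2) by (simp add: flip_bit_sd)
      then show ?thesis using s by auto
    next
      case l then have "W = flip_low V i" using g(2) by (simp add: flip_low_sd)
      then show ?thesis using l by auto
    qed
  qed
  ultimately show "W \<in> AQ_nbr n V" using assms unfolding AQ_nbr_def AQ_adj_def AQ_vertices_def by blast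
qed

lemma nbr_sub: "AQ_nbr n V \<subseteq> Pow {1..n}"
  unfolding AQ_nbr_def using adj_gen by blast

definition Bmap :: "nat \<Rightarrow> nat set \<Rightarrow> nat set" where
  "Bmap n X = {i \<in> {1..n+1}. if i = 1 then (1 \<in> X) \<noteq> (2 \<in> X) else (i - 1 \<in> X) \<noteq> (i + 1 \<in> X)}"

lemma Bmap_sd: "Bmap n (sd X Y) = sd (Bmap n X) (Bmap n Y)"
  unfolding Bmap_def by (auto simp: set_eq_iff)

lemma Bmap_empty: "Bmap n {} = {}" unfolding Bmap_def by auto

lemma Bmap_inj: "inj_on (Bmap n) (Pow {1..n})"
proof (rule inj_onI, rule ccontr)
  fix X Y assume X: "X \<in> Pow {1..n}" and Y: "Y \<in> Pow {1..n}" and eq: "Bmap n X = Bmap n Y" and ne: "X \<noteq> Y"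
  let ?W = "sd X Y"
  have Wsub: "?W \<subseteq> {1..n}" using X Y unfolding sd_def by blast
  have Wne: "?W \<noteq> {}" using ne by (simp add: sd_empty_iff)
  have fW: "finite ?W" using Wsub finite_subset by blast
  define k where "k = Max ?W"
  have kW: "k \<in> ?W" unfolding k_def using fW Wne by (rule Max_in)
  have k1: "1 \<le> k" "k \<le> n" using kW Wsub by auto
  have k2: "k + 2 \<notin> ?W" using Max_ge[OF fW, of "k+2"] k_def by fastforce
  have "k + 1 \<in> Bmap n ?W" unfolding Bmap_def using kW k1 k2 by (simp del: sd_mem)
  moreover have "Bmap n ?W = {}" by (simp add: Bmap_sd eq)
  ultimately show False by simp
qed

lemma Bmap_low: "1 \<le> i \<Longrightarrow> i \<le> n \<Longrightarrow> Bmap n {1..i} = {i, i+1}"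
  unfolding Bmap_def by (auto simp: set_eq_iff split: if_splits)

lemma Bmap_sing: "2 \<le> i \<Longrightarrow> i \<le> n \<Longrightarrow> Bmap n {i} = {i-1, i+1}"
  unfolding Bmap_def by (auto simp: set_eq_iff split: if_splits)

lemma Bmap_one: "1 \<le> n \<Longrightarrow> Bmap n {1} = {1, 2}"
  unfolding Bmap_def by (auto simp: set_eq_iff split: if_splits)

lemma Bmap_Gen: assumes "1 \<le> n" shows "Bmap n ` Gen n = E (n+1)"
proof (rule set_eqI, rule iffI)
  fix e assume "e \<in> Bmap n ` Gen n"
  then obtain g where g: "g \<in> Gen n" "e = Bmap n g" by auto
  from g(1) consider (s) i where "g = {i}" "1 \<le> i" "i \<le> n" | (l) i where "g = {1..i}" "2 \<le> i" "i \<le> n"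
    unfolding Gen_def by blast
  then show "e \<in> E (n+1)"
  proof cases
    case s
    show ?thesis
    proof (cases "i = 1")
      case True then show ?thesis using g s Bmap_one assms by (simp add: E_pair_iff)
    next
      case False then show ?thesis using g s Bmap_sing[of i n] by (simp add: E_pair_iff; arith)
    qed
  next
    case l then show ?thesis using g Bmap_low[of i n] by (simp add: E_pair_iff)
  qed
next
  fix e assume "e \<in> E (n+1)"
  then obtain x y where e: "e = {x,y}" "1 \<le> x" "x < y" "y \<le> n+1" "y \<le> x + 2" using E_elem by blast
  consider (a) "y = x + 1" "x = 1" | (b) "y = x + 1" "x \<noteq> 1" | (c) "y = x + 2" using e by arith
  then show "e \<in> Bmap n ` Gen n"
  proof cases
    case a
    then have xy: "x = 1" "y = 2" by simp_all
    have "e = {1,2}" using e(1) xy by simp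
    then have "e = Bmap n {1}" using Bmap_one[OF assms] by simp
    moreover have "{1} \<in> Gen n" unfolding Gen_def using assms by auto
    ultimately show ?thesis by blast
  next
    case b
    then have "e = Bmap n {1..x}" using Bmap_low[of x n] e by simp
    moreover have "{1..x} \<in> Gen n" unfolding Gen_def using b e by auto
    ultimately show ?thesis by blast
  next
    case c
    then have "e = Bmap n {x+1}" using Bmap_sing[of "x+1" n] e by simp
    moreover have "{x+1} \<in> Gen n" unfolding Gen_def using c e by auto
    ultimately show ?thesis by blast
  qed
qed


lemma image_nbr: assumes "V \<in> Pow {1..n}" "1 \<le> n"
  shows "Bmap n ` AQ_nbr n V = Nb (n+1) (Bmap n V)"
proof -
  have "Bmap n ` AQ_nbr n V = (\<lambda>g. sd (Bmap n V) (Bmap n g)) ` Gen n"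
    unfolding nbr_eq[OF assms(1)] image_image Bmap_sd by simp
  also have "\<dots> = (\<lambda>e. sd (Bmap n V) e) ` (Bmap n ` Gen n)" by (simp add: image_image)
  also have "\<dots> = Nb (n+1) (Bmap n V)" unfolding Nb_def Bmap_Gen[OF assms(2)] ..
  finally show ?thesis .
qed

theorem lemma2p9:
  fixes n :: nat and X Y Z U :: "nat set"
  assumes "n \<ge> 5"
    and "AQ_path2 n Y X Z"
    and "U \<in> AQ_N n {Y, X, Z}"
  shows "int (card (AQ_N n {U, X, Y, Z})) \<ge> 8 * int n - 31 \<and>
         (Z = flip_low X n \<longrightarrow> int (card (AQ_N n {U, X, Y, Z})) \<ge> 8 * int n - 29)"
proof -
  have n1: "1 \<le> n" using assms(1) by simp
  from assms(2) have ne: "Y \<noteq> X" "X \<noteq> Z" "Y \<noteq> Z" and a1: "AQ_adj n Y X" and a2: "AQ_adj n X Z"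
    unfolding AQ_path2_def by auto
  from adj_gen[OF a1] obtain g1 where YP: "Y \<in> Pow {1..n}" and XP: "X \<in> Pow {1..n}"
    and g1: "g1 \<in> Gen n" "X = sd Y g1" by blast
  have Yg: "Y = sd X g1" using g1(2) by simp
  from adj_gen[OF a2] obtain g2 where ZP: "Z \<in> Pow {1..n}" and g2: "g2 \<in> Gen n" "Z = sd X g2" by blast
  from assms(3) have Un: "U \<notin> {Y,X,Z}" and "\<exists>V\<in>{Y,X,Z}. U \<in> AQ_nbr n V" unfolding AQ_N_def by auto
  then have UP: "U \<in> Pow {1..n}" using nbr_sub by blast
  let ?T = "{U, X, Y, Z}"
  let ?m = "n + 1"
  have TP: "?T \<subseteq> Pow {1..n}" using UP XP YP ZP by auto
  let ?S = "\<Union>V\<in>?T. AQ_nbr n V"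
  have SP: "?S \<subseteq> Pow {1..n}" using nbr_sub by blast
  have inj: "inj_on (Bmap n) (Pow {1..n})" by (rule Bmap_inj)
  define x where "x = Bmap n X"
  define y where "y = Bmap n Y"
  define z where "z = Bmap n Z"
  define u where "u = Bmap n U"
  define e1 where "e1 = Bmap n g1"
  define e2 where "e2 = Bmap n g2"
  have e1E: "e1 \<in> E ?m" unfolding e1_def using g1(1) Bmap_Gen[OF n1] by blast
  have e2E: "e2 \<in> E ?m" unfolding e2_def using g2(1) Bmap_Gen[OF n1] by blast
  have y: "y = sd x e1" unfolding y_def x_def e1_def Yg Bmap_sd ..
  have z: "z = sd x e2" unfolding z_def x_def e2_def g2(2) Bmap_sd ..
  have injeq: "Bmap n A = Bmap n B \<longleftrightarrow> A = B" if "A \<in> Pow {1..n}" "B \<in> Pow {1..n}" for A B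
    using inj that by (auto simp: inj_on_def)
  have yz: "y \<noteq> z" unfolding y_def z_def using injeq[OF YP ZP] ne(3) by simp
  have e12: "e1 \<noteq> e2" using yz y z by auto
  have ux: "u \<noteq> x" "u \<noteq> y" "u \<noteq> z" unfolding u_def x_def y_def z_def
    using injeq[OF UP XP] injeq[OF UP YP] injeq[OF UP ZP] Un by auto
  have "Bmap n ` (?S - ?T) = Bmap n ` ?S - Bmap n ` ?T"
    using SP TP by (intro inj_on_image_set_diff[OF inj]) auto
  also have "Bmap n ` ?S = (\<Union>V\<in>?T. Bmap n ` AQ_nbr n V)" by (rule image_UN)
  also have "\<dots> = (\<Union>V\<in>?T. Nb ?m (Bmap n V))" using image_nbr TP n1 by (intro SUP_cong) auto
  also have "\<dots> = (\<Union>v\<in>{u,x,y,z}. Nb ?m v)" unfolding u_def x_def y_def z_def by simp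
  also have "Bmap n ` ?T = {u,x,y,z}" unfolding u_def x_def y_def z_def by simp
  finally have imeq: "Bmap n ` (?S - ?T) = (\<Union>v\<in>{u,x,y,z}. Nb ?m v) - {u,x,y,z}" .
  have "card (AQ_N n ?T) = card (Bmap n ` (?S - ?T))"
    unfolding AQ_N_def using SP by (intro card_image[symmetric] inj_on_subset[OF inj]) auto
  then have ceq: "card (AQ_N n ?T) = card ((\<Union>v\<in>{u,x,y,z}. Nb ?m v) - {u,x,y,z})" using imeq by simp
  have m2: "?m \<ge> 2" using n1 by simp
  have r1: "8 * int ?m - 39 \<le> int (card ((\<Union>v\<in>{u,x,y,z}. Nb ?m v) - {u,x,y,z}))"
    by (rule Bmain(1)[OF m2 e1E e2E e12 y z ux])
  have r2: "Z = flip_low X n \<longrightarrow> 8 * int ?m - 37 \<le> int (card ((\<Union>v\<in>{u,x,y,z}. Nb ?m v) - {u,x,y,z}))"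
  proof
    assume "Z = flip_low X n"
    then have "sd X g2 = sd X {1..n}" using g2(2) by (simp add: flip_low_sd)
    then have "g2 = {1..n}" by (simp add: sd_inj)
    then have "e2 = {?m - 1, ?m}" unfolding e2_def using Bmap_low[OF n1 order_refl] by simp
    then show "8 * int ?m - 37 \<le> int (card ((\<Union>v\<in>{u,x,y,z}. Nb ?m v) - {u,x,y,z}))"
      by (rule Bmain(2)[OF m2 e1E e2E e12 y z ux])
  qed
  show ?thesis using r1 r2 ceq by auto
qed

end
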